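(* If Weighted Majority Rule 5 selects $P$ over $Q$, then $SC(P)\le SC(Q)+(1+\sqrt2)\,SC(Z)$ for every point $Z$ of the metric space.
   Context: Voters $N$ and candidates $P,Q$ are points of an arbitrary metric space $(X,d)$; $SC(Y)=\sum_{i\in N}d(i,Y)$ for $Y\in X$. $A$ is the set of voters preferring $P$ ($d(i,P)\le d(i,Q)$) with strengths $\alpha_i=d(i,Q)/d(i,P)$; $B$ the set preferring $Q$ with strengths $\beta_j=d(j,P)/d(j,Q)$. Let $w(x)=\frac{\sqrt2x-1}{x+1}$ for $x>\sqrt2$ and $w(x)=x-1$ for $1\le x\le\sqrt2$. Weighted Majority Rule 5 selects $P$ over $Q$ iff $\sum_{i\in A}w(\alpha_i)\ge\sum_{j\in B}w(\beta_j)$. *)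

theory Defs
  imports "HOL-Analysis.Analysis"
begin

definition wmr5_w :: "real \<Rightarrow> real" where
  "wmr5_w x = (if x > sqrt 2 then (sqrt 2 * x - 1) / (x + 1) else x - 1)"

text \<open>If a = 0 the strength is infinite; we use the limit
  value sqrt 2 of w at infinity (and 0 if also b = 0, i.e. a tie of strength 1).\<close>
definition voter_weight :: "real \<Rightarrow> real \<Rightarrow> real" where
  "voter_weight a b = (if a = 0 then (if b = 0 then 0 else sqrt 2) else wmr5_w (b / a))"

definition SC :: "'v set \<Rightarrow> ('v \<Rightarrow> 'a::metric_space) \<Rightarrow> 'a \<Rightarrow> real" where
  "SC N loc Y = (\<Sum>i\<in>N. dist (loc i) Y)"

definition WMR5_selects :: "'v set \<Rightarrow> ('v \<Rightarrow> 'a::metric_space) \<Rightarrow> 'a \<Rightarrow> 'a \<Rightarrow> bool" where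
  "WMR5_selects N loc P Q \<longleftrightarrow>
     (\<Sum>i\<in>{i\<in>N. dist (loc i) P \<le> dist (loc i) Q}. voter_weight (dist (loc i) P) (dist (loc i) Q))
     \<ge> (\<Sum>j\<in>{j\<in>N. dist (loc j) Q < dist (loc j) P}. voter_weight (dist (loc j) Q) (dist (loc j) P))"

end

theory Submission
  imports Defs
begin

lemma s2_facts: "sqrt 2 * sqrt 2 = (2::real)" "sqrt 2 > (1::real)" "sqrt 2 > (5/4::real)"
proof -
  show "sqrt 2 * sqrt 2 = (2::real)" by simp
  show "sqrt 2 > (1::real)" by simp
  have "(5/4::real) = sqrt ((5/4)^2)" by simp
  also have "\<dots> < sqrt 2" by (subst real_sqrt_less_iff) (simp add: power2_eq_square)
  finally show "sqrt 2 > (5/4::real)" .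
qed

lemma w_props:
  assumes "r \<ge> 1"
  shows "0 \<le> wmr5_w r" "wmr5_w r \<le> sqrt 2" "wmr5_w r \<le> r - 1"
proof -
  note s = s2_facts
  show "0 \<le> wmr5_w r"
  proof (cases "r > sqrt 2")
    case True
    have "sqrt 2 * r - 1 \<ge> 0" using mult_mono[of 1 "sqrt 2" 1 r] s assms by simp
    then show ?thesis using True assms by (simp add: wmr5_w_def)
  qed (use assms in \<open>simp add: wmr5_w_def\<close>)
  show "wmr5_w r \<le> sqrt 2"
  proof (cases "r > sqrt 2")
    case True
    have "sqrt 2 * r - 1 \<le> sqrt 2 * (r+1)" using s by (simp add: algebra_simps)
    then show ?thesis using True assms by (simp add: wmr5_w_def divide_le_eq)
  qed (use assms s in \<open>simp add: wmr5_w_def\<close>)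
  show "wmr5_w r \<le> r - 1"
  proof (cases "r > sqrt 2")
    case True
    have "sqrt 2 * r \<le> r * r" using True assms by (intro mult_right_mono) auto
    hence "sqrt 2 * r - 1 \<le> (r - 1) * (r+1)" by (simp add: algebra_simps)
    then show ?thesis using True assms by (simp add: wmr5_w_def divide_le_eq)
  qed (use assms in \<open>simp add: wmr5_w_def\<close>)
qed

lemma w_lower:
  assumes "r > 1"
  shows "r - 1 \<le> r * wmr5_w r"
proof (cases "r > sqrt 2")
  case True
  note s = s2_facts
  define s2 where "s2 = sqrt (2::real)"
  have s1: "s2 > 5/4" "s2 > 1" using s by (auto simp: s2_def)
  have "0 \<le> (2*(s2-1)*r - 1)^2" by simp
  hence "0 \<le> 4*(s2-1)*((s2-1)*r^2 - r + 1) - (4*(s2-1) - 1)"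
    by (simp add: power2_eq_square algebra_simps)
  moreover have "4*(s2-1) - 1 > 0" using s1 by simp
  ultimately have "0 < 4*(s2-1)*((s2-1)*r^2 - r + 1)" by linarith
  hence q: "0 < (s2-1)*r^2 - r + 1" using s1 by (simp add: zero_less_mult_iff)
  have "(r - 1) * (r+1) \<le> r * (s2 * r - 1)"
    using q by (simp add: power2_eq_square algebra_simps)
  hence "r - 1 \<le> r * (s2 * r - 1) / (r + 1)" using assms by (simp add: le_divide_eq)
  then show ?thesis using True by (simp add: wmr5_w_def s2_def)
next
  case False
  have "1 * (r - 1) \<le> r * (r - 1)" using assms by (intro mult_right_mono) auto
  then show ?thesis using False by (simp add: wmr5_w_def)
qed

lemma voterA:
  fixes a b t x :: real
  assumes "0 \<le> a" "a \<le> b" "0 \<le> t" "0 \<le> x" "x \<le> a + t"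
  shows "a - b - (1 + sqrt 2) * t \<le> - (x * voter_weight a b)"
proof (cases "a = 0")
  case True
  show ?thesis
  proof (cases "b = 0")
    case True
    then show ?thesis using \<open>a = 0\<close> assms by (simp add: voter_weight_def)
  next
    case False
    have "x * sqrt 2 \<le> t * sqrt 2" using assms True by simp
    moreover have "0 \<le> t * sqrt 2" using assms by simp
    moreover have vw: "voter_weight a b = sqrt 2" using True False by (simp add: voter_weight_def)
    moreover have e: "(1 + sqrt 2) * t = t + t * sqrt 2" by (simp add: algebra_simps)
    ultimately show ?thesis using assms unfolding vw e by linarith
  qed
next
  case False
  hence ap: "a > 0" using assms by simp
  define r where "r = b / a"
  have r1: "r \<ge> 1" using ap assms by (simp add: r_def)
  note W = w_props[OF r1]
  have "a * wmr5_w r \<le> a * (r - 1)" using W(3) ap by simp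
  also have "\<dots> = b - a" using ap by (simp add: r_def algebra_simps)
  finally have h1: "a * wmr5_w r \<le> b - a" .
  have "x * wmr5_w r \<le> (a + t) * wmr5_w r" using W(1) assms by (simp add: mult_right_mono)
  also have "\<dots> = a * wmr5_w r + t * wmr5_w r" by (simp add: algebra_simps)
  also have "t * wmr5_w r \<le> t * sqrt 2" using W(2) assms by (simp add: mult_left_mono)
  finally have "x * wmr5_w r \<le> a * wmr5_w r + t * sqrt 2" by simp
  then show ?thesis using h1 False assms by (simp add: voter_weight_def r_def algebra_simps)
qed

lemma voterB:
  fixes a b t x :: real
  assumes "0 \<le> b" "b < a" "0 \<le> t" "0 \<le> x" "a \<le> x + t"
  shows "a - b - (1 + sqrt 2) * t \<le> x * voter_weight b a"
proof (cases "b = 0")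
  case True
  have "1 * x \<le> sqrt 2 * x" using assms s2_facts(2) by (intro mult_right_mono) auto
  hence "x \<le> sqrt 2 * x" by simp
  moreover have "0 \<le> t * sqrt 2" using assms by simp
  moreover have vw: "voter_weight b a = sqrt 2" using True assms by (simp add: voter_weight_def)
  moreover have e: "(1 + sqrt 2) * t = t + t * sqrt 2" by (simp add: algebra_simps)
  moreover have "x * sqrt 2 = sqrt 2 * x" by simp
  ultimately show ?thesis using assms unfolding vw e by linarith
next
  case False
  hence bp: "b > 0" using assms by simp
  define r where "r = a / b"
  have r1: "r > 1" using bp assms by (simp add: r_def)
  note W = w_props[of r] w_lower[OF r1]
  have "b * (r - 1) \<le> b * (r * wmr5_w r)" using W(4) bp by simp
  hence h1: "a - b \<le> a * wmr5_w r" using bp by (simp add: r_def algebra_simps)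
  have "a * wmr5_w r \<le> (x + t) * wmr5_w r" using W(1) r1 assms by (simp add: mult_right_mono)
  also have "\<dots> = x * wmr5_w r + t * wmr5_w r" by (simp add: algebra_simps)
  also have "t * wmr5_w r \<le> t * sqrt 2" using W(2) r1 assms by (simp add: mult_left_mono)
  finally have "a - b \<le> x * wmr5_w r + t * sqrt 2" using h1 by simp
  then show ?thesis using False assms by (simp add: voter_weight_def r_def algebra_simps)
qed

theorem mainTheorem15:
  fixes N :: "'v set" and loc :: "'v \<Rightarrow> 'a::metric_space" and P Q Z :: 'a
  assumes "finite N"
    and "WMR5_selects N loc P Q"
  shows "SC N loc P \<le> SC N loc Q + (1 + sqrt 2) * SC N loc Z"
proof -
  define x where "x = dist P Z"
  define f where "f i = dist (loc i) P - dist (loc i) Q - (1 + sqrt 2) * dist (loc i) Z" for i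
  define A where "A = {i\<in>N. dist (loc i) P \<le> dist (loc i) Q}"
  define B where "B = {j\<in>N. dist (loc j) Q < dist (loc j) P}"
  have fin: "finite A" "finite B" using assms(1) by (auto simp: A_def B_def)
  have AB: "N = A \<union> B" "A \<inter> B = {}" by (auto simp: A_def B_def)
  have x0: "x \<ge> 0" by (simp add: x_def)
  have sumf: "sum f N = SC N loc P - SC N loc Q - (1 + sqrt 2) * SC N loc Z"
    by (simp add: f_def SC_def sum_subtractf sum_distrib_left)
  have fA: "f i \<le> - (x * voter_weight (dist (loc i) P) (dist (loc i) Q))" if "i \<in> A" for i
  proof -
    have "x \<le> dist (loc i) P + dist (loc i) Z"
      using dist_triangle[of P Z "loc i"] unfolding x_def by (simp add: dist_commute)
    then show ?thesis using that unfolding f_def A_def by (intro voterA) (auto simp: x0)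
  qed
  have fB: "f i \<le> x * voter_weight (dist (loc i) Q) (dist (loc i) P)" if "i \<in> B" for i
  proof -
    have "dist (loc i) P \<le> x + dist (loc i) Z"
      using dist_triangle[of "loc i" P Z] unfolding x_def by (simp add: dist_commute add.commute)
    then show ?thesis using that unfolding f_def B_def by (intro voterB) (auto simp: x0)
  qed
  have "sum f N = sum f A + sum f B" using AB fin by (simp add: sum.union_disjoint)
  also have "\<dots> \<le> (\<Sum>i\<in>A. - (x * voter_weight (dist (loc i) P) (dist (loc i) Q)))
      + (\<Sum>i\<in>B. x * voter_weight (dist (loc i) Q) (dist (loc i) P))"
    by (intro add_mono sum_mono fA fB)
  also have "\<dots> = x * ((\<Sum>i\<in>B. voter_weight (dist (loc i) Q) (dist (loc i) P))
      - (\<Sum>i\<in>A. voter_weight (dist (loc i) P) (dist (loc i) Q)))"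
    by (simp add: sum_negf sum_distrib_left algebra_simps)
  also have "\<dots> \<le> 0"
    using assms(2) x0 unfolding WMR5_selects_def A_def B_def
    by (simp add: mult_nonneg_nonpos)
  finally show ?thesis using sumf by simp
qed

end
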